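(* Let $r\ge1$, let $A$ be a forest of $r$ rooted trees without free edges, let $\overline a$ carry $r$ free edges, and let $a$ be without free edges, where $a$ and $\overline a$ are both aromas or both aromatic trees. Let $\mathcal G(a,A,\overline a)$ be the set of graftings of $A$ on $\overline a$ whose result is isomorphic to $a$, and $\mathcal C(a,A,\overline a)$ the set of admissible cuts $c$ of $a$ such that $P^c(a)\cong A$ and $\overline R^c(a)\cong\overline a$. Then \[|\mathcal C(a,A,\overline a)|=\frac{\sigma(a)}{\sigma(A)\,\sigma(\overline a)}\,|\mathcal G(a,A,\overline a)|.\]
   Context: Fix a finite set $C$ of decorations. A (rooted) tree is a finite connected directed graph with $C$-decorated vertices in which each vertex has exactly one outgoing edge except the root, which has none (edges point towards the root). An aroma is a finite connected directed graph in which every vertex has exactly one outgoing edge; it contains a unique cycle. An aromatic tree is a disjoint union of one tree and finitely many aromas. An object with free edges additionally carries at each vertex $v$ a number $r_v\ge0$ of free edges. $\sigma(\cdot)$ denotes the number of automorphisms preserving decorations (and free-edge numbers). A grafting of $A$ on $\overline a$ is a map $g$ from the set of the $r$ connected components of $A$ (considered as distinct) to the vertex set of $\overline a$ such that $|g^{-1}(v)|=r_v$ for every vertex $v$; its result is obtained by adding, for each component, an edge from its root to $g(\text{component})$ and removing all free edges. An admissible cut $c$ of $a$ is a set of edges of $a$, none lying on a cycle, such that every directed path contains at most one edge of $c$. Removing the edges of $c$, $P^c(a)$ is the forest of components containing neither the root nor a cycle (each rooted at the source of its cut edge), and $R^c(a)$ is the remaining part (containing the root and all cycles); $\overline R^c(a)$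 is $R^c(a)$ with, for each cut edge $u\to w$, a free edge added at $w$. *)

theory Defs
  imports Complex_Main "HOL-Library.FuncSet"
begin

text \<open>An edge is identified with its source vertex u; it points to the vertex w
  with gpar X u = Some w.  Vertices with gpar = None are roots.
  gfree X v is the number of free edges carried by vertex v.\<close>

record ('v, 'c) agraph =
  gverts :: "'v set"
  gpar   :: "'v \<Rightarrow> 'v option"
  gdec   :: "'v \<Rightarrow> 'c"
  gfree  :: "'v \<Rightarrow> nat"

definition gedges :: "('v, 'c, 'z) agraph_scheme \<Rightarrow> ('v \<times> 'v) set" where
  "gedges X = {(u, w). u \<in> gverts X \<and> gpar X u = Some w}"

definition gwf :: "('v, 'c, 'z) agraph_scheme \<Rightarrow> bool" where
  "gwf X \<longleftrightarrow> finite (gverts X) \<and>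
     (\<forall>u \<in> gverts X. \<forall>w. gpar X u = Some w \<longrightarrow> w \<in> gverts X)"

definition groots :: "('v, 'c, 'z) agraph_scheme \<Rightarrow> 'v set" where
  "groots X = {v \<in> gverts X. gpar X v = None}"

definition no_free_edges :: "('v, 'c, 'z) agraph_scheme \<Rightarrow> bool" where
  "no_free_edges X \<longleftrightarrow> (\<forall>v \<in> gverts X. gfree X v = 0)"

definition num_free_edges :: "('v, 'c, 'z) agraph_scheme \<Rightarrow> nat" where
  "num_free_edges X = (\<Sum>v \<in> gverts X. gfree X v)"

definition is_forest :: "('v, 'c, 'z) agraph_scheme \<Rightarrow> bool" where
  "is_forest X \<longleftrightarrow> gwf X \<and> (\<forall>v \<in> gverts X. (v, v) \<notin> (gedges X)\<^sup>+)"

definition is_aroma :: "('v, 'c, 'z) agraph_scheme \<Rightarrow> bool" where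
  "is_aroma X \<longleftrightarrow> gwf X \<and> gverts X \<noteq> {} \<and> (\<forall>v \<in> gverts X. gpar X v \<noteq> None) \<and>
     (\<forall>x \<in> gverts X. \<forall>y \<in> gverts X. (x, y) \<in> (gedges X \<union> (gedges X)\<inverse>)\<^sup>*)"

text \<open>Aromatic tree: disjoint union of one tree and finitely many aromas,
  i.e. a finite graph of this kind with exactly one root.\<close>
definition is_aromatic_tree :: "('v, 'c, 'z) agraph_scheme \<Rightarrow> bool" where
  "is_aromatic_tree X \<longleftrightarrow> gwf X \<and> card (groots X) = 1"

definition giso :: "('v, 'c, 'z) agraph_scheme \<Rightarrow> ('w, 'c, 'y) agraph_scheme \<Rightarrow> ('v \<Rightarrow> 'w) \<Rightarrow> bool" where
  "giso X Y f \<longleftrightarrow> bij_betw f (gverts X) (gverts Y) \<and>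
     (\<forall>v \<in> gverts X. gpar Y (f v) = map_option f (gpar X v) \<and>
                      gdec Y (f v) = gdec X v \<and> gfree Y (f v) = gfree X v)"

definition gisomorphic :: "('v, 'c, 'z) agraph_scheme \<Rightarrow> ('w, 'c, 'y) agraph_scheme \<Rightarrow> bool" where
  "gisomorphic X Y \<longleftrightarrow> (\<exists>f. giso X Y f)"

definition sigma :: "('v, 'c, 'z) agraph_scheme \<Rightarrow> nat" where
  "sigma X = card {f. f \<in> extensional (gverts X) \<and> giso X X f}"

text \<open>Grafting: g maps the components of A (identified with their roots) to vertices
  of Ab; the result lives on the disjoint union.\<close>
definition graftings :: "('v, 'c) agraph \<Rightarrow> ('w, 'c) agraph \<Rightarrow> ('v \<Rightarrow> 'w) set" where
  "graftings A Ab = {g. g \<in> extensional (groots A) \<and> g ` groots A \<subseteq> gverts Ab \<and>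
      (\<forall>v \<in> gverts Ab. card {x \<in> groots A. g x = v} = gfree Ab v)}"

definition graft :: "('v, 'c) agraph \<Rightarrow> ('w, 'c) agraph \<Rightarrow> ('v \<Rightarrow> 'w) \<Rightarrow> ('v + 'w, 'c) agraph" where
  "graft A Ab g = \<lparr> gverts = Inl ` gverts A \<union> Inr ` gverts Ab,
     gpar = (\<lambda>x. case x of
               Inl u \<Rightarrow> (if u \<in> groots A then Some (Inr (g u)) else map_option Inl (gpar A u))
             | Inr w \<Rightarrow> map_option Inr (gpar Ab w)),
     gdec = case_sum (gdec A) (gdec Ab),
     gfree = (\<lambda>_. 0) \<rparr>"

text \<open>Admissible cuts: a set c of edges (identified by their sources), none on a
  cycle, such that no directed path contains two edges of c.\<close>
definition admissible_cut :: "('u, 'c) agraph \<Rightarrow> 'u set \<Rightarrow> bool" where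
  "admissible_cut a c \<longleftrightarrow> c \<subseteq> {u \<in> gverts a. gpar a u \<noteq> None} \<and>
     (\<forall>u \<in> c. (u, u) \<notin> (gedges a)\<^sup>+) \<and>
     (\<forall>u1 \<in> c. \<forall>u2 \<in> c. \<forall>w. gpar a u1 = Some w \<longrightarrow> (w, u2) \<notin> (gedges a)\<^sup>*)"

definition cut_pverts :: "('u, 'c) agraph \<Rightarrow> 'u set \<Rightarrow> 'u set" where
  "cut_pverts a c = {x \<in> gverts a. \<exists>u \<in> c. (x, u) \<in> {(p, q) \<in> gedges a. p \<notin> c}\<^sup>*}"

definition prune_part :: "('u, 'c) agraph \<Rightarrow> 'u set \<Rightarrow> ('u, 'c) agraph" where
  "prune_part a c = \<lparr> gverts = cut_pverts a c,
     gpar = (\<lambda>x. if x \<in> c then None else gpar a x),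
     gdec = gdec a, gfree = gfree a \<rparr>"

definition root_part_free :: "('u, 'c) agraph \<Rightarrow> 'u set \<Rightarrow> ('u, 'c) agraph" where
  "root_part_free a c = \<lparr> gverts = gverts a - cut_pverts a c,
     gpar = gpar a, gdec = gdec a,
     gfree = (\<lambda>w. gfree a w + card {u \<in> c. gpar a u = Some w}) \<rparr>"

end

theory Submission
  imports Defs
begin


definition isos where "isos X Y = {f. f \<in> extensional (gverts X) \<and> giso X Y f}"

lemma sigma_isos: "sigma X = card (isos X X)" by (simp add: sigma_def isos_def)

lemma giso_comp:
  assumes "giso X Y f" "giso Y Z h" shows "giso X Z (h \<circ> f)"
proof -
  have "bij_betw (h \<circ> f) (gverts X) (gverts Z)"
    using assms unfolding giso_def by (meson bij_betw_trans)
  moreover have "\<forall>v \<in> gverts X. f v \<in> gverts Y" using assms unfolding giso_def bij_betw_def by blast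
  ultimately show ?thesis using assms unfolding giso_def by (auto simp: option.map_comp)
qed

lemma giso_restrict:
  assumes "gwf X" shows "giso X Y (restrict f (gverts X)) \<longleftrightarrow> giso X Y f"
proof -
  have "map_option (restrict f (gverts X)) (gpar X v) = map_option f (gpar X v)" if "v \<in> gverts X" for v
    using assms that unfolding gwf_def by (cases "gpar X v") auto
  moreover have "bij_betw (restrict f (gverts X)) (gverts X) (gverts Y) \<longleftrightarrow> bij_betw f (gverts X) (gverts Y)"
    by (rule bij_betw_cong) simp
  ultimately show ?thesis unfolding giso_def by auto
qed

lemma giso_id: "giso X X id"
  unfolding giso_def by (simp add: option.map_id)

lemma giso_inv:
  assumes "giso X Y f" "gwf X" shows "giso Y X (inv_into (gverts X) f)"
proof -
  have b: "bij_betw f (gverts X) (gverts Y)" using assms unfolding giso_def by auto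
  have bi: "bij_betw (inv_into (gverts X) f) (gverts Y) (gverts X)" using b by (rule bij_betw_inv_into)
  have "gpar X (inv_into (gverts X) f y) = map_option (inv_into (gverts X) f) (gpar Y y)
     \<and> gdec X (inv_into (gverts X) f y) = gdec Y y \<and> gfree X (inv_into (gverts X) f y) = gfree Y y"
    if y: "y \<in> gverts Y" for y
  proof -
    obtain x where x: "x \<in> gverts X" "y = f x" using y b by (auto simp: bij_betw_def)
    have ix: "inv_into (gverts X) f y = x" using x b by (simp add: bij_betw_def inv_into_f_f)
    have e: "gpar Y y = map_option f (gpar X x)" "gdec Y y = gdec X x" "gfree Y y = gfree X x"
      using assms(1) x unfolding giso_def by auto
    have "map_option (inv_into (gverts X) f) (map_option f (gpar X x)) = gpar X x"
      using assms(2) x b unfolding gwf_def bij_betw_def by (cases "gpar X x") (auto simp: inv_into_f_f)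
    then show ?thesis using ix e by simp
  qed
  then show ?thesis using bi unfolding giso_def by auto
qed

lemma giso_vert: "giso X Y f \<Longrightarrow> x \<in> gverts X \<Longrightarrow> f x \<in> gverts Y"
  unfolding giso_def bij_betw_def by auto

lemma card_isos_left:
  assumes h: "giso X Y h" and wX: "gwf X"
  shows "card (isos X Y) = sigma X"
proof -
  let ?V = "gverts X"
  have b: "bij_betw h ?V (gverts Y)" using h unfolding giso_def by auto
  have hi: "giso Y X (inv_into ?V h)" using giso_inv[OF h wX] .
  have "bij_betw (\<lambda>\<phi>. restrict (h \<circ> \<phi>) ?V) (isos X X) (isos X Y)"
  proof (rule bij_betw_byWitness[where f'="\<lambda>f. restrict (inv_into ?V h \<circ> f) ?V"])
    show "\<forall>\<phi>\<in>isos X X. restrict (inv_into ?V h \<circ> restrict (h \<circ> \<phi>) ?V) ?V = \<phi>"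
    proof
      fix \<phi> assume p: "\<phi> \<in> isos X X"
      have "\<phi> x \<in> ?V" if "x \<in> ?V" for x using p that giso_vert unfolding isos_def by auto
      then show "restrict (inv_into ?V h \<circ> restrict (h \<circ> \<phi>) ?V) ?V = \<phi>"
        using p b unfolding isos_def bij_betw_def by (auto simp: fun_eq_iff inv_into_f_f extensional_def)
    qed
    show "\<forall>f\<in>isos X Y. restrict (h \<circ> restrict (inv_into ?V h \<circ> f) ?V) ?V = f"
    proof
      fix f assume p: "f \<in> isos X Y"
      have "f x \<in> h ` ?V" if "x \<in> ?V" for x using p that giso_vert b unfolding isos_def bij_betw_def by auto
      then show "restrict (h \<circ> restrict (inv_into ?V h \<circ> f) ?V) ?V = f"
        using p unfolding isos_def by (auto simp: fun_eq_iff f_inv_into_f extensional_def)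
    qed
    show "(\<lambda>\<phi>. restrict (h \<circ> \<phi>) ?V) ` isos X X \<subseteq> isos X Y"
      using giso_comp[OF _ h] giso_restrict[OF wX] unfolding isos_def by auto
    show "(\<lambda>f. restrict (inv_into ?V h \<circ> f) ?V) ` isos X Y \<subseteq> isos X X"
      using giso_comp[OF _ hi] giso_restrict[OF wX] unfolding isos_def by auto
  qed
  then show ?thesis unfolding sigma_isos by (simp add: bij_betw_same_card)
qed

lemma card_isos_right:
  assumes h: "giso X Y h" and wX: "gwf X" and wY: "gwf Y"
  shows "card (isos X Y) = sigma Y"
proof -
  let ?V = "gverts X" and ?W = "gverts Y"
  have b: "bij_betw h ?V ?W" using h unfolding giso_def by auto
  have hi: "giso Y X (inv_into ?V h)" using giso_inv[OF h wX] .
  have "bij_betw (\<lambda>\<psi>. restrict (\<psi> \<circ> h) ?V) (isos Y Y) (isos X Y)"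
  proof (rule bij_betw_byWitness[where f'="\<lambda>f. restrict (f \<circ> inv_into ?V h) ?W"])
    show "\<forall>\<psi>\<in>isos Y Y. restrict (restrict (\<psi> \<circ> h) ?V \<circ> inv_into ?V h) ?W = \<psi>"
    proof
      fix \<psi> assume p: "\<psi> \<in> isos Y Y"
      have "inv_into ?V h y \<in> ?V \<and> h (inv_into ?V h y) = y" if "y \<in> ?W" for y
        using that b by (metis bij_betw_def bij_betw_inv_into_left bij_betw_inv_into bij_betw_apply f_inv_into_f)
      then show "restrict (restrict (\<psi> \<circ> h) ?V \<circ> inv_into ?V h) ?W = \<psi>"
        using p unfolding isos_def by (auto simp: fun_eq_iff extensional_def)
    qed
    show "\<forall>f\<in>isos X Y. restrict (restrict (f \<circ> inv_into ?V h) ?W \<circ> h) ?V = f"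
    proof
      fix f assume p: "f \<in> isos X Y"
      have "h x \<in> ?W \<and> inv_into ?V h (h x) = x" if "x \<in> ?V" for x
        using that b by (simp add: bij_betw_def inv_into_f_f bij_betw_apply)
      then show "restrict (restrict (f \<circ> inv_into ?V h) ?W \<circ> h) ?V = f"
        using p unfolding isos_def by (auto simp: fun_eq_iff extensional_def)
    qed
    show "(\<lambda>\<psi>. restrict (\<psi> \<circ> h) ?V) ` isos Y Y \<subseteq> isos X Y"
      using giso_comp[OF h] giso_restrict[OF wX] unfolding isos_def by auto
    show "(\<lambda>f. restrict (f \<circ> inv_into ?V h) ?W) ` isos X Y \<subseteq> isos Y Y"
      using giso_comp[OF hi] giso_restrict[OF wY] unfolding isos_def by auto
  qed
  then show ?thesis unfolding sigma_isos by (simp add: bij_betw_same_card)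
qed

lemma finite_isos: "finite (gverts X) \<Longrightarrow> finite (gverts Y) \<Longrightarrow> finite (isos X Y)"
proof -
  assume "finite (gverts X)" "finite (gverts Y)"
  then have "finite (PiE (gverts X) (\<lambda>_. gverts Y))" by (simp add: finite_PiE)
  moreover have "isos X Y \<subseteq> PiE (gverts X) (\<lambda>_. gverts Y)"
    unfolding isos_def using giso_vert by (auto simp: PiE_def Pi_def)
  ultimately show ?thesis by (rule finite_subset[rotated])
qed

lemma sigma_pos: assumes "gwf X" shows "sigma X > 0"
proof -
  have "restrict id (gverts X) \<in> isos X X"
    unfolding isos_def using giso_restrict[OF assms] giso_id by auto
  moreover have "finite (isos X X)" using assms finite_isos unfolding gwf_def by auto
  ultimately show ?thesis unfolding sigma_isos by (auto simp: card_gt_0_iff)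
qed



lemma graft_simps:
  "gverts (graft A Ab g) = Inl ` gverts A \<union> Inr ` gverts Ab"
  "gpar (graft A Ab g) (Inl u) = (if u \<in> groots A then Some (Inr (g u)) else map_option Inl (gpar A u))"
  "gpar (graft A Ab g) (Inr w) = map_option Inr (gpar Ab w)"
  "gdec (graft A Ab g) (Inl u) = gdec A u"
  "gdec (graft A Ab g) (Inr w) = gdec Ab w"
  "gfree (graft A Ab g) x = 0"
  by (simp_all add: graft_def)

lemma groots_sub: "groots X \<subseteq> gverts X" unfolding groots_def by auto

lemma gwf_graft:
  assumes "gwf A" "gwf Ab" "g \<in> graftings A Ab" shows "gwf (graft A Ab g)"
  using assms unfolding gwf_def graftings_def
  by (auto simp: graft_simps groots_def split: sum.splits if_splits) blast

lemma forest_reach: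
  assumes fA: "is_forest A" and v: "v \<in> gverts A"
  shows "\<exists>\<rho>\<in>groots A. (v, \<rho>) \<in> (gedges A)\<^sup>*"
proof -
  have fin: "finite (gedges A)"
  proof -
    have "gedges A \<subseteq> gverts A \<times> gverts A" using fA unfolding is_forest_def gwf_def gedges_def by auto
    then show ?thesis using fA unfolding is_forest_def gwf_def by (meson finite_SigmaI finite_subset)
  qed
  have ac: "acyclic (gedges A)"
    unfolding acyclic_def
  proof
    fix x show "(x, x) \<notin> (gedges A)\<^sup>+"
    proof
      assume h: "(x, x) \<in> (gedges A)\<^sup>+"
      then obtain z where "(x, z) \<in> gedges A" by (meson tranclD)
      then have "x \<in> gverts A" unfolding gedges_def by auto
      then show False using h fA unfolding is_forest_def by auto
    qed
  qed
  have wf: "wf ((gedges A)\<inverse>)" using finite_acyclic_wf_converse[OF fin ac] .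
  show ?thesis using v
  proof (induction v rule: wf_induct_rule[OF wf])
    case (1 v)
    show ?case
    proof (cases "gpar A v")
      case None then show ?thesis using 1 unfolding groots_def by auto
    next
      case (Some y)
      then have e: "(v, y) \<in> gedges A" using 1 unfolding gedges_def by auto
      then have "y \<in> gverts A" using fA 1 Some unfolding is_forest_def gwf_def by auto
      then obtain \<rho> where "\<rho> \<in> groots A" "(y, \<rho>) \<in> (gedges A)\<^sup>*" using 1 e by auto
      then show ?thesis using e by (meson converse_rtrancl_into_rtrancl)
    qed
  qed
qed

definition Ecut :: "('u, 'c) agraph \<Rightarrow> 'u set \<Rightarrow> ('u \<times> 'u) set" where
  "Ecut a c = {(p, q) \<in> gedges a. p \<notin> c}"

lemma cut_pverts_alt: "cut_pverts a c = {x \<in> gverts a. \<exists>u \<in> c. (x, u) \<in> (Ecut a c)\<^sup>*}"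
  unfolding cut_pverts_def Ecut_def by simp

lemma Ecut_sub: "(Ecut a c)\<^sup>* \<subseteq> (gedges a)\<^sup>*"
  unfolding Ecut_def by (rule rtrancl_mono) auto

lemma gwf_prune: assumes "gwf a" shows "gwf (prune_part a c)"
proof -
  have "y \<in> cut_pverts a c" if x: "x \<in> cut_pverts a c" and nc: "x \<notin> c" and p: "gpar a x = Some y" for x y
  proof -
    obtain u where u: "u \<in> c" "(x, u) \<in> (Ecut a c)\<^sup>*" "x \<in> gverts a" using x unfolding cut_pverts_alt by auto
    have "x \<noteq> u" using u nc by auto
    then obtain y' where "(x, y') \<in> Ecut a c" "(y', u) \<in> (Ecut a c)\<^sup>*"
      using u(2) by (meson converse_rtranclE)
    moreover have "y' = y" using calculation p unfolding Ecut_def gedges_def by auto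
    moreover have "y \<in> gverts a" using p u assms unfolding gwf_def by auto
    ultimately show ?thesis using u unfolding cut_pverts_alt by auto
  qed
  moreover have "finite (cut_pverts a c)" using assms unfolding gwf_def cut_pverts_def by auto
  ultimately show ?thesis unfolding gwf_def prune_part_def by auto
qed

lemma gwf_root: assumes "gwf a" shows "gwf (root_part_free a c)"
proof -
  have "y \<notin> cut_pverts a c" if x: "x \<in> gverts a" "x \<notin> cut_pverts a c" and p: "gpar a x = Some y" for x y
  proof
    assume y: "y \<in> cut_pverts a c"
    then obtain u where u: "u \<in> c" "(y, u) \<in> (Ecut a c)\<^sup>*" unfolding cut_pverts_alt by auto
    show False
    proof (cases "x \<in> c")
      case True then show ?thesis using x unfolding cut_pverts_alt by auto
    next
      case False
      then have "(x, y) \<in> Ecut a c" using x p unfolding Ecut_def gedges_def by auto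
      then have "(x, u) \<in> (Ecut a c)\<^sup>*" using u by (meson converse_rtrancl_into_rtrancl)
      then show False using x u unfolding cut_pverts_alt by auto
    qed
  qed
  then show ?thesis using assms unfolding gwf_def root_part_free_def by auto
qed



lemma part1:
  fixes A :: "('v, 'c) agraph" and Ab :: "('w, 'c) agraph" and a :: "('u, 'c) agraph"
  assumes fA: "is_forest A" and nA: "no_free_edges A" and wB: "gwf Ab" and wa: "gwf a"
    and na: "no_free_edges a"
    and g: "g \<in> graftings A Ab" and f: "f \<in> isos (graft A Ab g) a"
  defines "c \<equiv> f ` Inl ` groots A"
  shows "admissible_cut a c" "cut_pverts a c = f ` Inl ` gverts A"
     "restrict (f \<circ> Inl) (gverts A) \<in> isos A (prune_part a c)"
     "restrict (f \<circ> Inr) (gverts Ab) \<in> isos Ab (root_part_free a c)"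
proof -
  have wA: "gwf A" using fA unfolding is_forest_def by auto
  define V where "V = Inl ` gverts A \<union> Inr ` gverts Ab"
  have fi: "giso (graft A Ab g) a f" using f unfolding isos_def by auto
  have fb: "bij_betw f V (gverts a)" using fi unfolding giso_def V_def by (simp add: graft_simps)
  have finj: "inj_on f V" using fb unfolding bij_betw_def by auto
  have fim: "f ` V = gverts a" using fb unfolding bij_betw_def by auto
  have fpar: "gpar a (f x) = map_option f (gpar (graft A Ab g) x)" if "x \<in> V" for x
    using fi that unfolding giso_def V_def by (simp add: graft_simps)
  have fdec: "gdec a (f x) = gdec (graft A Ab g) x" if "x \<in> V" for x
    using fi that unfolding giso_def V_def by (simp add: graft_simps)
  have gB: "g \<rho> \<in> gverts Ab" if "\<rho> \<in> groots A" for \<rho> using g that unfolding graftings_def by auto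
  have rA: "\<rho> \<in> gverts A" if "\<rho> \<in> groots A" for \<rho> using that unfolding groots_def by auto
  have parL_root: "gpar a (f (Inl \<rho>)) = Some (f (Inr (g \<rho>)))" if "\<rho> \<in> groots A" for \<rho>
    using fpar[of "Inl \<rho>"] that rA unfolding V_def by (simp add: graft_simps)
  have parL: "gpar a (f (Inl v)) = map_option (f \<circ> Inl) (gpar A v)" if "v \<in> gverts A" "v \<notin> groots A" for v
    using fpar[of "Inl v"] that unfolding V_def by (simp add: graft_simps option.map_comp)
  have parR: "gpar a (f (Inr w)) = map_option (f \<circ> Inr) (gpar Ab w)" if "w \<in> gverts Ab" for w
    using fpar[of "Inr w"] that unfolding V_def by (simp add: graft_simps option.map_comp)
  have inL: "f (Inl v) \<in> gverts a" if "v \<in> gverts A" for v using fim that unfolding V_def by auto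
  have inR: "f (Inr v) \<in> gverts a" if "v \<in> gverts Ab" for v using fim that unfolding V_def by auto
  have neqLR: "f (Inl v) \<noteq> f (Inr w)" if "v \<in> gverts A" "w \<in> gverts Ab" for v w
    using finj that unfolding V_def inj_on_def by blast
  have eqLL: "f (Inl v) = f (Inl v') \<longleftrightarrow> v = v'" if "v \<in> gverts A" "v' \<in> gverts A" for v v'
    using finj that unfolding V_def inj_on_def by blast
  have eqRR: "f (Inr v) = f (Inr v') \<longleftrightarrow> v = v'" if "v \<in> gverts Ab" "v' \<in> gverts Ab" for v v'
    using finj that unfolding V_def inj_on_def by blast
  have stayR: "y \<in> f ` Inr ` gverts Ab" if "(f (Inr w), y) \<in> (gedges a)\<^sup>*" "w \<in> gverts Ab" for w y
    using that(1)
  proof (induction rule: rtrancl_induct)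
    case base then show ?case using that(2) by auto
  next
    case (step y z)
    then obtain w' where w': "w' \<in> gverts Ab" "y = f (Inr w')" by auto
    have "gpar a y = Some z" using step unfolding gedges_def by auto
    then obtain w'' where "gpar Ab w' = Some w''" "z = f (Inr w'')" using parR[OF w'(1)] w'(2) by auto
    then show ?case using wB w'(1) unfolding gwf_def by auto
  qed
  have cV: "c \<subseteq> f ` Inl ` gverts A" unfolding c_def using rA by auto
  show adm: "admissible_cut a c"
    unfolding admissible_cut_def
  proof (intro conjI ballI allI impI)
    show "c \<subseteq> {u \<in> gverts a. gpar a u \<noteq> None}" unfolding c_def using parL_root inL rA by auto
  next
    fix u assume u: "u \<in> c"
    then obtain \<rho> where \<rho>: "\<rho> \<in> groots A" "u = f (Inl \<rho>)" unfolding c_def by auto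
    show "(u, u) \<notin> (gedges a)\<^sup>+"
    proof
      assume "(u, u) \<in> (gedges a)\<^sup>+"
      then obtain z where "(u, z) \<in> gedges a" "(z, u) \<in> (gedges a)\<^sup>*" by (meson tranclD)
      then have "(f (Inr (g \<rho>)), u) \<in> (gedges a)\<^sup>*" using parL_root[OF \<rho>(1)] \<rho> unfolding gedges_def by auto
      then have "u \<in> f ` Inr ` gverts Ab" using stayR gB \<rho> by auto
      then show False using neqLR \<rho> rA by auto
    qed
  next
    fix u1 u2 w assume u: "u1 \<in> c" "u2 \<in> c" "gpar a u1 = Some w"
    then obtain \<rho> where \<rho>: "\<rho> \<in> groots A" "u1 = f (Inl \<rho>)" unfolding c_def by auto
    obtain \<rho>2 where \<rho>2: "\<rho>2 \<in> groots A" "u2 = f (Inl \<rho>2)" using u unfolding c_def by auto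
    have w: "w = f (Inr (g \<rho>))" using parL_root[OF \<rho>(1)] \<rho> u by auto
    show "(w, u2) \<notin> (gedges a)\<^sup>*"
    proof
      assume "(w, u2) \<in> (gedges a)\<^sup>*"
      then have "u2 \<in> f ` Inr ` gverts Ab" using stayR gB \<rho> w by auto
      then show False using neqLR \<rho>2 rA by auto
    qed
  qed
  have notc: "f (Inl v) \<notin> c" if "v \<in> gverts A" "v \<notin> groots A" for v
    using that eqLL rA unfolding c_def by auto
  have mapL: "(f (Inl x), f (Inl y)) \<in> (Ecut a c)\<^sup>*" if "(x, y) \<in> (gedges A)\<^sup>*" for x y
    using that
  proof (induction rule: rtrancl_induct)
    case base then show ?case by simp
  next
    case (step y z)
    then have y: "y \<in> gverts A" "gpar A y = Some z" unfolding gedges_def by auto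
    then have ny: "y \<notin> groots A" unfolding groots_def by auto
    have "(f (Inl y), f (Inl z)) \<in> Ecut a c"
      using parL[OF y(1) ny] y inL[OF y(1)] notc[OF y(1) ny] unfolding Ecut_def gedges_def by auto
    then show ?case using step by (meson rtrancl_into_rtrancl)
  qed
  show cp: "cut_pverts a c = f ` Inl ` gverts A"
  proof
    show "f ` Inl ` gverts A \<subseteq> cut_pverts a c"
    proof
      fix x assume "x \<in> f ` Inl ` gverts A"
      then obtain v where v: "v \<in> gverts A" "x = f (Inl v)" by auto
      obtain \<rho> where "\<rho> \<in> groots A" "(v, \<rho>) \<in> (gedges A)\<^sup>*" using forest_reach[OF fA v(1)] by auto
      then show "x \<in> cut_pverts a c" using mapL inL v unfolding cut_pverts_alt c_def by blast
    qed
    show "cut_pverts a c \<subseteq> f ` Inl ` gverts A"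
    proof
      fix x assume "x \<in> cut_pverts a c"
      then obtain u where u: "u \<in> c" "(x, u) \<in> (Ecut a c)\<^sup>*" unfolding cut_pverts_alt by auto
      show "x \<in> f ` Inl ` gverts A"
        using u(2)
      proof (induction rule: converse_rtrancl_induct)
        case base then show ?case using u(1) cV by auto
      next
        case (step x y)
        then have x: "x \<in> gverts a" "gpar a x = Some y" unfolding Ecut_def gedges_def by auto
        then obtain z where z: "z \<in> V" "x = f z" using fim by (metis imageE)
        show ?case
        proof (cases z)
          case (Inl v) then show ?thesis using z unfolding V_def by auto
        next
          case (Inr w)
          then have w: "w \<in> gverts Ab" using z unfolding V_def by auto
          then obtain w'' where "gpar Ab w = Some w''" "y = f (Inr w'')" using parR[OF w] x z Inr by auto
          moreover have "w'' \<in> gverts Ab" using calculation wB w unfolding gwf_def by auto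
          ultimately show ?thesis using step(3) neqLR by (metis (no_types, lifting) imageE)
        qed
      qed
    qed
  qed
  show "restrict (f \<circ> Inl) (gverts A) \<in> isos A (prune_part a c)"
    unfolding isos_def
  proof (simp, subst giso_restrict[OF wA])
    show "giso A (prune_part a c) (f \<circ> Inl)"
      unfolding giso_def
    proof (intro conjI ballI)
      have "inj_on (f \<circ> Inl) (gverts A)" using eqLL unfolding inj_on_def by auto
      then show "bij_betw (f \<circ> Inl) (gverts A) (gverts (prune_part a c))"
        unfolding bij_betw_def prune_part_def using cp by (auto simp: image_comp)
    next
      fix v assume v: "v \<in> gverts A"
      show "gpar (prune_part a c) ((f \<circ> Inl) v) = map_option (f \<circ> Inl) (gpar A v)"
      proof (cases "v \<in> groots A")
        case True then show ?thesis unfolding prune_part_def c_def groots_def by auto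
      next
        case False then show ?thesis using notc[OF v False] parL[OF v False] unfolding prune_part_def by auto
      qed
      show "gdec (prune_part a c) ((f \<circ> Inl) v) = gdec A v"
        using fdec[of "Inl v"] v unfolding prune_part_def V_def by (simp add: graft_simps)
      show "gfree (prune_part a c) ((f \<circ> Inl) v) = gfree A v"
        using na nA inL[OF v] v unfolding prune_part_def no_free_edges_def by auto
    qed
  qed
  show "restrict (f \<circ> Inr) (gverts Ab) \<in> isos Ab (root_part_free a c)"
    unfolding isos_def
  proof (simp, subst giso_restrict[OF wB])
    show "giso Ab (root_part_free a c) (f \<circ> Inr)"
      unfolding giso_def
    proof (intro conjI ballI)
      have "inj_on (f \<circ> Inr) (gverts Ab)" using eqRR unfolding inj_on_def by auto
      moreover have "gverts a - f ` Inl ` gverts A = f ` Inr ` gverts Ab"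
        using fim neqLR unfolding V_def by (auto simp: image_Un) (metis)
      ultimately show "bij_betw (f \<circ> Inr) (gverts Ab) (gverts (root_part_free a c))"
        unfolding bij_betw_def root_part_free_def using cp by (auto simp: image_comp)
    next
      fix w assume w: "w \<in> gverts Ab"
      show "gpar (root_part_free a c) ((f \<circ> Inr) w) = map_option (f \<circ> Inr) (gpar Ab w)"
        using parR[OF w] unfolding root_part_free_def by auto
      show "gdec (root_part_free a c) ((f \<circ> Inr) w) = gdec Ab w"
        using fdec[of "Inr w"] w unfolding root_part_free_def V_def by (simp add: graft_simps)
      have "{u \<in> c. gpar a u = Some (f (Inr w))} = (f \<circ> Inl) ` {\<rho> \<in> groots A. g \<rho> = w}"
        unfolding c_def using parL_root eqRR gB w by auto
      moreover have "inj_on (f \<circ> Inl) {\<rho> \<in> groots A. g \<rho> = w}"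
        using eqLL rA unfolding inj_on_def by auto
      ultimately have "card {u \<in> c. gpar a u = Some (f (Inr w))} = card {\<rho> \<in> groots A. g \<rho> = w}"
        using card_image by fastforce
      also have "\<dots> = gfree Ab w" using g w unfolding graftings_def by auto
      finally show "gfree (root_part_free a c) ((f \<circ> Inr) w) = gfree Ab w"
        using na inR[OF w] unfolding root_part_free_def no_free_edges_def by auto
    qed
  qed
qed



lemma part2:
  fixes A :: "('v, 'c) agraph" and Ab :: "('w, 'c) agraph" and a :: "('u, 'c) agraph"
  assumes fA: "is_forest A" and nA: "no_free_edges A" and wB: "gwf Ab" and wa: "gwf a"
    and na: "no_free_edges a"
    and c: "admissible_cut a c" and al: "\<alpha> \<in> isos A (prune_part a c)"
    and be: "\<beta> \<in> isos Ab (root_part_free a c)"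
  defines "g \<equiv> restrict (\<lambda>\<rho>. inv_into (gverts Ab) \<beta> (the (gpar a (\<alpha> \<rho>)))) (groots A)"
  and "f \<equiv> restrict (case_sum \<alpha> \<beta>) (Inl ` gverts A \<union> Inr ` gverts Ab)"
  shows "\<alpha> ` groots A = c"
    "\<And>\<rho>. \<rho> \<in> groots A \<Longrightarrow> gpar a (\<alpha> \<rho>) = Some (\<beta> (g \<rho>)) \<and> g \<rho> \<in> gverts Ab"
    "g \<in> graftings A Ab" "f \<in> isos (graft A Ab g) a"
proof -
  have wA: "gwf A" using fA unfolding is_forest_def by auto
  define CP where "CP = cut_pverts a c"
  have ai: "giso A (prune_part a c) \<alpha>" and bi: "giso Ab (root_part_free a c) \<beta>"
    using al be unfolding isos_def by auto
  have ab: "bij_betw \<alpha> (gverts A) CP" using ai unfolding giso_def prune_part_def CP_def by auto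
  have bb: "bij_betw \<beta> (gverts Ab) (gverts a - CP)" using bi unfolding giso_def root_part_free_def CP_def by auto
  have CPa: "CP \<subseteq> gverts a" unfolding CP_def cut_pverts_def by auto
  have cCP: "c \<subseteq> CP" using c unfolding CP_def cut_pverts_def admissible_cut_def by auto
  have pnone: "gpar a x \<noteq> None" if xx: "x \<in> CP" "x \<notin> c" for x
  proof -
    obtain u where u: "u \<in> c" "(x, u) \<in> (Ecut a c)\<^sup>*" using xx unfolding CP_def cut_pverts_alt by auto
    have "x \<noteq> u" using u xx by auto
    then obtain y' where "(x, y') \<in> Ecut a c" using u(2) by (meson converse_rtranclE)
    then show ?thesis unfolding Ecut_def gedges_def by auto
  qed
  have apar: "gpar (prune_part a c) (\<alpha> v) = map_option \<alpha> (gpar A v)" if "v \<in> gverts A" for v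
    using ai that unfolding giso_def by auto
  have rA: "\<rho> \<in> gverts A" if "\<rho> \<in> groots A" for \<rho> using that unfolding groots_def by auto
  show aimg: "\<alpha> ` groots A = c"
  proof
    show "\<alpha> ` groots A \<subseteq> c"
    proof
      fix x assume "x \<in> \<alpha> ` groots A"
      then obtain \<rho> where \<rho>: "\<rho> \<in> groots A" "x = \<alpha> \<rho>" by auto
      have "x \<in> CP" using ab \<rho> rA unfolding bij_betw_def by auto
      moreover have "gpar (prune_part a c) x = None" using apar[OF rA[OF \<rho>(1)]] \<rho> unfolding groots_def by auto
      ultimately show "x \<in> c" using pnone[of x] unfolding prune_part_def by (simp split: if_splits)
    qed
    show "c \<subseteq> \<alpha> ` groots A"
    proof
      fix u assume u: "u \<in> c"
      then obtain v where v: "v \<in> gverts A" "u = \<alpha> v" using cCP ab unfolding bij_betw_def by auto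
      have "gpar (prune_part a c) u = None" using u unfolding prune_part_def by auto
      then have "gpar A v = None" using apar[OF v(1)] v by auto
      then show "u \<in> \<alpha> ` groots A" using v unfolding groots_def by auto
    qed
  qed
  have cpar: "\<exists>w. gpar a u = Some w \<and> w \<in> gverts a - CP" if u: "u \<in> c" for u
  proof -
    obtain w where w: "gpar a u = Some w" using c u unfolding admissible_cut_def by auto
    have "w \<in> gverts a" using c u w wa unfolding admissible_cut_def gwf_def by auto
    moreover have "w \<notin> CP"
    proof
      assume "w \<in> CP"
      then obtain u2 where "u2 \<in> c" "(w, u2) \<in> (Ecut a c)\<^sup>*" unfolding CP_def cut_pverts_alt by auto
      then have "(w, u2) \<in> (gedges a)\<^sup>*" using Ecut_sub by auto
      then show False using c u w \<open>u2 \<in> c\<close> unfolding admissible_cut_def by auto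
    qed
    ultimately show ?thesis using w by auto
  qed
  show gpr: "gpar a (\<alpha> \<rho>) = Some (\<beta> (g \<rho>)) \<and> g \<rho> \<in> gverts Ab" if \<rho>: "\<rho> \<in> groots A" for \<rho>
  proof -
    have "\<alpha> \<rho> \<in> c" using aimg \<rho> by auto
    then obtain w where w: "gpar a (\<alpha> \<rho>) = Some w" "w \<in> gverts a - CP" using cpar by blast
    then obtain v where v: "v \<in> gverts Ab" "w = \<beta> v" using bb unfolding bij_betw_def by auto
    have "g \<rho> = v" unfolding g_def using \<rho> w v bb by (simp add: bij_betw_def inv_into_f_f)
    then show ?thesis using w v by auto
  qed
  have binj: "\<beta> x = \<beta> y \<longleftrightarrow> x = y" if "x \<in> gverts Ab" "y \<in> gverts Ab" for x y
    using bb that unfolding bij_betw_def inj_on_def by blast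
  have ainj: "\<alpha> x = \<alpha> y \<longleftrightarrow> x = y" if "x \<in> gverts A" "y \<in> gverts A" for x y
    using ab that unfolding bij_betw_def inj_on_def by blast
  show gg: "g \<in> graftings A Ab"
    unfolding graftings_def
  proof (intro CollectI conjI ballI)
    show "g \<in> extensional (groots A)" unfolding g_def by simp
    show "g ` groots A \<subseteq> gverts Ab" using gpr by auto
    fix v assume v: "v \<in> gverts Ab"
    have "{u \<in> c. gpar a u = Some (\<beta> v)} = \<alpha> ` {x \<in> groots A. g x = v}"
    proof
      show "{u \<in> c. gpar a u = Some (\<beta> v)} \<subseteq> \<alpha> ` {x \<in> groots A. g x = v}"
      proof
        fix u assume u: "u \<in> {u \<in> c. gpar a u = Some (\<beta> v)}"
        then obtain \<rho> where \<rho>: "\<rho> \<in> groots A" "u = \<alpha> \<rho>" using aimg by auto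
        then have "g \<rho> = v" using gpr[OF \<rho>(1)] u binj v by auto
        then show "u \<in> \<alpha> ` {x \<in> groots A. g x = v}" using \<rho> by auto
      qed
      show "\<alpha> ` {x \<in> groots A. g x = v} \<subseteq> {u \<in> c. gpar a u = Some (\<beta> v)}"
        using gpr aimg by auto
    qed
    moreover have "inj_on \<alpha> {x \<in> groots A. g x = v}" using ainj rA unfolding inj_on_def by auto
    ultimately have "card {u \<in> c. gpar a u = Some (\<beta> v)} = card {x \<in> groots A. g x = v}"
      using card_image by fastforce
    moreover have "gfree (root_part_free a c) (\<beta> v) = gfree Ab v" using bi v unfolding giso_def by auto
    moreover have "\<beta> v \<in> gverts a" using bb v unfolding bij_betw_def by auto
    ultimately show "card {x \<in> groots A. g x = v} = gfree Ab v"
      using na unfolding root_part_free_def no_free_edges_def by auto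
  qed
  have wG: "gwf (graft A Ab g)" using gwf_graft[OF wA wB gg] .
  show "f \<in> isos (graft A Ab g) a"
    unfolding isos_def f_def
  proof (simp add: graft_simps, subst giso_restrict[OF wG, simplified graft_simps])
    show "giso (graft A Ab g) a (case_sum \<alpha> \<beta>)"
      unfolding giso_def graft_simps
    proof (intro conjI ballI)
      have inj: "inj_on (case_sum \<alpha> \<beta>) (Inl ` gverts A \<union> Inr ` gverts Ab)"
        unfolding inj_on_def using ainj binj ab bb unfolding bij_betw_def by fastforce
      have "case_sum \<alpha> \<beta> ` (Inl ` gverts A \<union> Inr ` gverts Ab) = \<alpha> ` gverts A \<union> \<beta> ` gverts Ab"
        by (auto simp: image_Un image_comp)
      also have "\<dots> = gverts a" using ab bb CPa unfolding bij_betw_def by auto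
      finally show "bij_betw (case_sum \<alpha> \<beta>) (Inl ` gverts A \<union> Inr ` gverts Ab) (gverts a)"
        using inj unfolding bij_betw_def by auto
    next
      fix x assume x: "x \<in> Inl ` gverts A \<union> Inr ` gverts Ab"
      show "gpar a (case_sum \<alpha> \<beta> x) = map_option (case_sum \<alpha> \<beta>) (gpar (graft A Ab g) x)"
      proof (cases x)
        case (Inl v)
        then have v: "v \<in> gverts A" using x by auto
        show ?thesis
        proof (cases "v \<in> groots A")
          case True then show ?thesis using gpr Inl by (simp add: graft_simps)
        next
          case False
          then have "\<alpha> v \<notin> c" using aimg ainj v rA by auto
          then have "gpar a (\<alpha> v) = map_option \<alpha> (gpar A v)"
            using apar[OF v] unfolding prune_part_def by auto
          then show ?thesis using Inl False by (simp add: graft_simps option.map_comp comp_def)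
        qed
      next
        case (Inr w)
        then have w: "w \<in> gverts Ab" using x by auto
        have "gpar a (\<beta> w) = map_option \<beta> (gpar Ab w)"
          using bi w unfolding giso_def root_part_free_def by auto
        then show ?thesis using Inr by (simp add: graft_simps option.map_comp comp_def)
      qed
      show "gdec a (case_sum \<alpha> \<beta> x) = gdec (graft A Ab g) x"
        using x ai bi unfolding giso_def prune_part_def root_part_free_def by (auto simp: graft_simps)
      have "case_sum \<alpha> \<beta> x \<in> gverts a" using x ab bb CPa unfolding bij_betw_def by auto
      then show "gfree a (case_sum \<alpha> \<beta> x) = 0"
        using na unfolding no_free_edges_def by (simp add: graft_simps)
    qed
  qed
qed



lemma main_count:
  fixes A :: "('v, 'c) agraph" and Ab :: "('w, 'c) agraph" and a :: "('u, 'c) agraph"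
  assumes fA: "is_forest A" and nA: "no_free_edges A" and wB: "gwf Ab" and wa: "gwf a"
    and na: "no_free_edges a"
  shows "card {c. admissible_cut a c \<and> gisomorphic (prune_part a c) A
                          \<and> gisomorphic (root_part_free a c) Ab} * (sigma A * sigma Ab)
       = card {g \<in> graftings A Ab. gisomorphic (graft A Ab g) a} * sigma a"
proof -
  have wA: "gwf A" using fA unfolding is_forest_def by auto
  define C where "C = {c. admissible_cut a c \<and> gisomorphic (prune_part a c) A
                          \<and> gisomorphic (root_part_free a c) Ab}"
  define XX where "XX = (SIGMA g:graftings A Ab. isos (graft A Ab g) a)"
  define YY where "YY = (SIGMA c:C. isos A (prune_part a c) \<times> isos Ab (root_part_free a c))"
  define V where "V = Inl ` gverts A \<union> Inr ` gverts Ab"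
  define F where "F = (\<lambda>(g :: 'v \<Rightarrow> 'w, f :: 'v + 'w \<Rightarrow> 'u). (f ` Inl ` groots A, restrict (f \<circ> Inl) (gverts A), restrict (f \<circ> Inr) (gverts Ab)))"
  define G where "G = (\<lambda>(c :: 'u set, \<alpha> :: 'v \<Rightarrow> 'u, \<beta> :: 'w \<Rightarrow> 'u).
     (restrict (\<lambda>\<rho>. inv_into (gverts Ab) \<beta> (the (gpar a (\<alpha> \<rho>)))) (groots A),
      restrict (case_sum \<alpha> \<beta>) V))"
  have rA: "\<rho> \<in> gverts A" if "\<rho> \<in> groots A" for \<rho> using that unfolding groots_def by auto
  have bij: "bij_betw F XX YY"
  proof (rule bij_betw_byWitness[where f'=G])
    show "\<forall>p\<in>XX. G (F p) = p"
    proof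
      fix p assume "p \<in> XX"
      then obtain g f where p: "p = (g, f)" and g: "g \<in> graftings A Ab" and f: "f \<in> isos (graft A Ab g) a"
        unfolding XX_def by auto
      have fi: "giso (graft A Ab g) a f" and fe: "f \<in> extensional V"
        using f unfolding isos_def V_def by (auto simp: graft_simps)
      have finj: "inj_on f V" using fi unfolding giso_def bij_betw_def V_def by (auto simp: graft_simps)
      have gB: "g \<rho> \<in> gverts Ab" if "\<rho> \<in> groots A" for \<rho> using g that unfolding graftings_def by auto
      have e1: "restrict (\<lambda>\<rho>. inv_into (gverts Ab) (restrict (f \<circ> Inr) (gverts Ab))
                  (the (gpar a (restrict (f \<circ> Inl) (gverts A) \<rho>)))) (groots A) = g"
      proof
        fix \<rho> show "restrict (\<lambda>\<rho>. inv_into (gverts Ab) (restrict (f \<circ> Inr) (gverts Ab))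
                  (the (gpar a (restrict (f \<circ> Inl) (gverts A) \<rho>)))) (groots A) \<rho> = g \<rho>"
        proof (cases "\<rho> \<in> groots A")
          case True
          have "gpar a (f (Inl \<rho>)) = Some (f (Inr (g \<rho>)))"
            using fi True rA[OF True] unfolding giso_def by (auto simp: graft_simps)
          moreover have "inj_on (restrict (f \<circ> Inr) (gverts Ab)) (gverts Ab)"
            using finj unfolding inj_on_def V_def by auto
          ultimately show ?thesis using True rA[OF True] gB[OF True]
            by (simp add: inv_into_f_eq)
        next
          case False then show ?thesis using g unfolding graftings_def by (auto simp: extensional_def)
        qed
      qed
      have e2: "restrict (case_sum (restrict (f \<circ> Inl) (gverts A)) (restrict (f \<circ> Inr) (gverts Ab))) V = f"
      proof
        fix x show "restrict (case_sum (restrict (f \<circ> Inl) (gverts A)) (restrict (f \<circ> Inr) (gverts Ab))) V x = f x"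
          using fe unfolding V_def by (cases x) (auto simp: extensional_def)
      qed
      show "G (F p) = p" unfolding p F_def G_def using e1 e2 by simp
    qed
    show "\<forall>q\<in>YY. F (G q) = q"
    proof
      fix q assume "q \<in> YY"
      then obtain c \<alpha> \<beta> where q: "q = (c, \<alpha>, \<beta>)" and c: "c \<in> C" and al: "\<alpha> \<in> isos A (prune_part a c)"
        and be: "\<beta> \<in> isos Ab (root_part_free a c)" unfolding YY_def by auto
      have adm: "admissible_cut a c" using c unfolding C_def by auto
      have e1: "restrict (case_sum \<alpha> \<beta>) V ` Inl ` groots A = c"
        using part2(1)[OF fA nA wB wa na adm al be] rA unfolding V_def by (auto simp: image_comp) force
      have e2: "restrict (restrict (case_sum \<alpha> \<beta>) V \<circ> Inl) (gverts A) = \<alpha>"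
        using al unfolding isos_def V_def by (auto simp: fun_eq_iff extensional_def)
      have e3: "restrict (restrict (case_sum \<alpha> \<beta>) V \<circ> Inr) (gverts Ab) = \<beta>"
        using be unfolding isos_def V_def by (auto simp: fun_eq_iff extensional_def)
      show "F (G q) = q" unfolding q F_def G_def using e1 e2 e3 by simp
    qed
    show "F ` XX \<subseteq> YY"
    proof
      fix q assume "q \<in> F ` XX"
      then obtain g f where q: "q = F (g, f)" and g: "g \<in> graftings A Ab" and f: "f \<in> isos (graft A Ab g) a"
        unfolding XX_def by auto
      note P = part1[OF fA nA wB wa na g f]
      have "gisomorphic (prune_part a (f ` Inl ` groots A)) A"
        using giso_inv[OF _ wA] P(3) unfolding isos_def gisomorphic_def by blast
      moreover have "gisomorphic (root_part_free a (f ` Inl ` groots A)) Ab"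
        using giso_inv[OF _ wB] P(4) unfolding isos_def gisomorphic_def by blast
      ultimately show "q \<in> YY" using P unfolding q F_def YY_def C_def by auto
    qed
    show "G ` YY \<subseteq> XX"
    proof
      fix p assume "p \<in> G ` YY"
      then obtain c \<alpha> \<beta> where p: "p = G (c, \<alpha>, \<beta>)" and c: "c \<in> C" and al: "\<alpha> \<in> isos A (prune_part a c)"
        and be: "\<beta> \<in> isos Ab (root_part_free a c)" unfolding YY_def by auto
      have adm: "admissible_cut a c" using c unfolding C_def by auto
      note P = part2[OF fA nA wB wa na adm al be]
      show "p \<in> XX" using P(3,4) unfolding p G_def XX_def V_def by auto
    qed
  qed
  then have cXY: "card XX = card YY" by (rule bij_betw_same_card)
  have finA: "finite (gverts A)" and finB: "finite (gverts Ab)" and fina: "finite (gverts a)"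
    using wA wB wa unfolding gwf_def by auto
  have fin_graft: "finite (graftings A Ab)"
  proof -
    have "graftings A Ab \<subseteq> PiE (groots A) (\<lambda>_. gverts Ab)"
      unfolding graftings_def by (auto simp: PiE_def Pi_def)
    moreover have "finite (PiE (groots A) (\<lambda>_. gverts Ab))"
      using finA finB groots_sub by (meson finite_PiE finite_subset)
    ultimately show ?thesis by (rule finite_subset)
  qed
  have finC: "finite C"
  proof -
    have "C \<subseteq> Pow (gverts a)" unfolding C_def admissible_cut_def by auto
    then show ?thesis using fina by (meson finite_Pow_iff finite_subset)
  qed
  have "card XX = (\<Sum>g\<in>graftings A Ab. card (isos (graft A Ab g) a))"
    unfolding XX_def by (rule card_SigmaI[OF fin_graft]) (auto intro!: finite_isos simp: graft_simps finA finB fina)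
  also have "\<dots> = (\<Sum>g\<in>graftings A Ab. if gisomorphic (graft A Ab g) a then sigma a else 0)"
  proof (rule sum.cong[OF refl])
    fix g assume g: "g \<in> graftings A Ab"
    show "card (isos (graft A Ab g) a) = (if gisomorphic (graft A Ab g) a then sigma a else 0)"
    proof (cases "gisomorphic (graft A Ab g) a")
      case True
      then obtain h where "giso (graft A Ab g) a h" unfolding gisomorphic_def by auto
      then show ?thesis using card_isos_right gwf_graft[OF wA wB g] wa True by auto
    next
      case False
      then have "isos (graft A Ab g) a = {}" unfolding isos_def gisomorphic_def by auto
      then show ?thesis using False by simp
    qed
  qed
  also have "\<dots> = card {g \<in> graftings A Ab. gisomorphic (graft A Ab g) a} * sigma a"
    using sum.inter_filter[OF fin_graft, of "\<lambda>_. sigma a", symmetric] by simp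
  finally have cX: "card XX = card {g \<in> graftings A Ab. gisomorphic (graft A Ab g) a} * sigma a" .
  have "card YY = (\<Sum>c\<in>C. card (isos A (prune_part a c)) * card (isos Ab (root_part_free a c)))"
    unfolding YY_def
    by (subst card_SigmaI[OF finC]) (auto intro!: finite_isos finite_cartesian_product simp: card_cartesian_product
        finA finB fina prune_part_def root_part_free_def cut_pverts_def)
  also have "\<dots> = (\<Sum>c\<in>C. sigma A * sigma Ab)"
  proof (rule sum.cong[OF refl])
    fix c assume c: "c \<in> C"
    obtain h1 where h1: "giso (prune_part a c) A h1" using c unfolding C_def gisomorphic_def by auto
    obtain h2 where h2: "giso (root_part_free a c) Ab h2" using c unfolding C_def gisomorphic_def by auto
    have "card (isos A (prune_part a c)) = sigma A"
      using card_isos_left[OF giso_inv[OF h1 gwf_prune[OF wa]] wA] .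
    moreover have "card (isos Ab (root_part_free a c)) = sigma Ab"
      using card_isos_left[OF giso_inv[OF h2 gwf_root[OF wa]] wB] .
    ultimately show "card (isos A (prune_part a c)) * card (isos Ab (root_part_free a c)) = sigma A * sigma Ab"
      by simp
  qed
  also have "\<dots> = card C * (sigma A * sigma Ab)" by simp
  finally show ?thesis using cXY cX unfolding C_def by simp
qed


theorem proposition4p12:
  fixes A :: "('v, 'c::finite) agraph" and Ab :: "('w, 'c) agraph" and a :: "('u, 'c) agraph"
    and r :: nat
  assumes "r \<ge> 1"
    and "is_forest A" and "card (groots A) = r" and "no_free_edges A"
    and "gwf Ab" and "num_free_edges Ab = r"
    and "gwf a" and "no_free_edges a"
    and "(is_aroma a \<and> is_aroma Ab) \<or> (is_aromatic_tree a \<and> is_aromatic_tree Ab)"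
  shows "real (card {c. admissible_cut a c \<and> gisomorphic (prune_part a c) A
                          \<and> gisomorphic (root_part_free a c) Ab})
         = real (sigma a) / (real (sigma A) * real (sigma Ab))
           * real (card {g \<in> graftings A Ab. gisomorphic (graft A Ab g) a})"
proof -
  have wA: "gwf A" using assms(2) unfolding is_forest_def by auto
  have e: "card {c. admissible_cut a c \<and> gisomorphic (prune_part a c) A
                          \<and> gisomorphic (root_part_free a c) Ab} * (sigma A * sigma Ab)
       = card {g \<in> graftings A Ab. gisomorphic (graft A Ab g) a} * sigma a"
    using main_count[OF assms(2) assms(4) assms(5) assms(7) assms(8)] .
  have p1: "real (sigma A) > 0" using sigma_pos[OF wA] by simp
  have p2: "real (sigma Ab) > 0" using sigma_pos[OF assms(5)] by simp
  have e': "real (card {c. admissible_cut a c \<and> gisomorphic (prune_part a c) A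
                          \<and> gisomorphic (root_part_free a c) Ab}) * (real (sigma A) * real (sigma Ab))
       = real (card {g \<in> graftings A Ab. gisomorphic (graft A Ab g) a}) * real (sigma a)"
    using arg_cong[OF e, of real] by simp
  show ?thesis using e' p1 p2 by (simp add: field_simps)
qed

end
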